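(* For every integer $n\ge0$, \[ B_{n+1,n+1}(x)=\frac12\,\frac{(3n+2)!}{n!\,(2n+1)!}\,p_n(x),\qquad A_{n+1,n+1}(x)=-B_{n+1,n+1}(-x). \] For every integer $n\ge1$, with $b_n=2\,(\tfrac n2+1)_n\,\frac{(2n)!}{(3n+1)!}$, \[ b_nB_{n+1,n}(x)=\binom{n+\frac n2}{n}q_n(x)-\binom{n+\frac{n-1}2}{n}p_n(x),\qquad b_nB_{n,n+1}(x)=\binom{n+\frac n2}{n}q_n(x)+\binom{n+\frac{n-1}2}{n}p_n(x), \] and $A_{n+1,n}(x)=B_{n,n+1}(-x)$, $A_{n,n+1}(x)=B_{n+1,n}(-x)$.
   Context: Pochhammer symbol: $(a)_0=1$, $(a)_n=a(a+1)\cdots(a+n-1)$; for real $a$ and integer $n\ge0$, $\binom{n+a}{n}:=\frac{(a+1)_n}{n!}$. Define $p_n(x)=\sum_{k=0}^n\binom nk\binom{n+\frac k2}{n}(-1)^{n-k}x^k$ and $q_n(x)=\sum_{k=0}^n\binom nk\binom{n+\frac{k-1}2}{n}(-1)^{n-k}x^k$. Type I Legendre–Angelesco polynomials: for integers $n,m\ge 0$ with $n+m\ge1$, $(A_{n,m},B_{n,m})$ is the unique pair of polynomials with $\deg A_{n,m}\le n-1$, $\deg B_{n,m}\le m-1$ such that, writing $Q_{n,m}=A_{n,m}\chi_{[-1,0]}+B_{n,m}\chi_{[0,1]}$, one has $\int_{-1}^1 Q_{n,m}(x)x^k\,dx=0$ for $0\le k\le n+m-2$ and $\int_{-1}^1 Q_{n,m}(x)x^{n+m-1}\,dx=1$.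 *)

theory Defs
  imports "HOL-Analysis.Analysis" "HOL-Computational_Algebra.Polynomial"
begin

text \<open>Generalized binomial coefficient binom(n+a, n) := (a+1)_n / n!\<close>
definition rbinom :: "real \<Rightarrow> nat \<Rightarrow> real" where
  "rbinom a n = pochhammer (a + 1) n / fact n"

definition p_poly :: "nat \<Rightarrow> real poly" where
  "p_poly n = (\<Sum>k\<le>n. monom (real (n choose k) * rbinom (real k / 2) n * (-1) ^ (n - k)) k)"

definition q_poly :: "nat \<Rightarrow> real poly" where
  "q_poly n = (\<Sum>k\<le>n. monom (real (n choose k) * rbinom ((real k - 1) / 2) n * (-1) ^ (n - k)) k)"

text \<open>Defining conditions of the type I Legendre-Angelesco pair (A,B) for indices (n,m).
  deg A \<le> n-1 is rendered as (A = 0 \<or> degree A < n), which for n = 0 forces A = 0.\<close>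
definition LA_cond :: "nat \<Rightarrow> nat \<Rightarrow> real poly \<Rightarrow> real poly \<Rightarrow> bool" where
  "LA_cond n m A B \<longleftrightarrow>
     (A = 0 \<or> degree A < n) \<and> (B = 0 \<or> degree B < m) \<and>
     (\<forall>k. k + 1 < n + m \<longrightarrow>
        integral {-1..0} (\<lambda>x. poly A x * x ^ k) + integral {0..1} (\<lambda>x. poly B x * x ^ k) = 0) \<and>
     integral {-1..0} (\<lambda>x. poly A x * x ^ (n + m - 1)) + integral {0..1} (\<lambda>x. poly B x * x ^ (n + m - 1)) = 1"

definition LA_pair :: "nat \<Rightarrow> nat \<Rightarrow> real poly \<times> real poly" where
  "LA_pair n m = (THE AB. LA_cond n m (fst AB) (snd AB))"

definition LA_A :: "nat \<Rightarrow> nat \<Rightarrow> real poly" where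
  "LA_A n m = fst (LA_pair n m)"

definition LA_B :: "nat \<Rightarrow> nat \<Rightarrow> real poly" where
  "LA_B n m = snd (LA_pair n m)"

end

theory Submission imports Defs begin



definition E :: "nat \<Rightarrow> (nat \<Rightarrow> real) \<Rightarrow> real" where
  "E n g = (\<Sum>k\<le>n. real (n choose k) * (-1)^k * g k)"

lemma E_Suc: "E (Suc n) g = E n g - E n (\<lambda>k. g (Suc k))"
proof -
  have A: "(\<Sum>i\<le>n. real (n choose Suc i) * (-1)^Suc i * g (Suc i)) = E n g - g 0"
  proof -
    have "E n g = (\<Sum>k\<le>Suc n. real (n choose k) * (-1)^k * g k)"
      unfolding E_def by simp
    also have "\<dots> = g 0 + (\<Sum>i\<le>n. real (n choose Suc i) * (-1)^Suc i * g (Suc i))"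
      by (subst sum.atMost_Suc_shift) simp
    finally show ?thesis by simp
  qed
  have "E (Suc n) g = g 0 + (\<Sum>i\<le>n. real (Suc n choose Suc i) * (-1)^Suc i * g (Suc i))"
    unfolding E_def by (subst sum.atMost_Suc_shift) simp
  also have "\<dots> = g 0 + (\<Sum>i\<le>n. real (n choose i) * (-1)^Suc i * g (Suc i))
                  + (\<Sum>i\<le>n. real (n choose Suc i) * (-1)^Suc i * g (Suc i))"
    by (simp add: sum.distrib[symmetric] algebra_simps)
  also have "\<dots> = E n g - E n (\<lambda>k. g (Suc k))"
    unfolding A by (simp add: E_def sum_negf)
  finally show ?thesis .
qed

lemma E_diff: "E n (\<lambda>k. f k - g k) = E n f - E n g"
  unfolding E_def by (simp add: algebra_simps sum_subtractf)

lemma E_cmult: "E n (\<lambda>k. c * f k) = c * E n f"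
  unfolding E_def by (simp add: sum_distrib_left algebra_simps)

lemma E_poly: "degree P < n \<Longrightarrow> E n (\<lambda>k. poly P (real k)) = 0"
proof (induction n arbitrary: P)
  case 0 then show ?case by simp
next
  case (Suc n)
  define P' where "P' = pcompose P [:1,1:] - P"
  have "E (Suc n) (\<lambda>k. poly P (real k)) = - E n (\<lambda>k. poly P' (real k))"
    unfolding E_Suc P'_def by (simp add: E_diff poly_pcompose algebra_simps)
  moreover have "E n (\<lambda>k. poly P' (real k)) = 0"
  proof (cases "degree P = 0")
    case True
    then obtain c where "P = [:c:]" by (meson degree_eq_zeroE)
    then have "P' = 0" unfolding P'_def by simp
    then show ?thesis by (simp add: E_def)
  next
    case False
    have dle: "degree P' \<le> degree P"
using degree_pcompose[of P "[:1,1:]"] unfolding P'_def by (intro degree_diff_le) auto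
    have "coeff P' (degree P) = 0"
      unfolding P'_def using lead_coeff_comp[of "[:1,1:]" P] degree_pcompose[of P "[:1,1:]"] by simp
    then have "degree P' < degree P"
      using dle False by (metis le_neq_implies_less leading_coeff_0_iff degree_0 neq0_conv)
    then show ?thesis using Suc by simp
  qed
  ultimately show ?case by simp
qed

lemma E_inv: "a > 0 \<Longrightarrow> E n (\<lambda>k. 1 / (real k + a)) = fact n / pochhammer a (Suc n)"
proof (induction n arbitrary: a)
  case 0 then show ?case by (simp add: E_def)
next
  case (Suc n)
  have "E (Suc n) (\<lambda>k. 1 / (real k + a)) = E n (\<lambda>k. 1 / (real k + a)) - E n (\<lambda>k. 1 / (real k + (a+1)))"
    unfolding E_Suc by (simp add: algebra_simps)
  also have "\<dots> = fact n / pochhammer a (Suc n) - fact n / pochhammer (a+1) (Suc n)"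
    using Suc by simp
  also have "\<dots> = fact (Suc n) / pochhammer a (Suc (Suc n))"
  proof -
    define X where "X = pochhammer a (Suc n)"
    define Y where "Y = pochhammer (a+1) (Suc n)"
    have X: "X > 0" "Y > 0" unfolding X_def Y_def using Suc.prems by (auto intro: pochhammer_pos)
    have "pochhammer a (Suc (Suc n)) = a * Y" unfolding Y_def by (rule pochhammer_rec)
    moreover have "pochhammer a (Suc (Suc n)) = (a + of_nat (Suc n)) * X" unfolding X_def by (rule pochhammer_rec')
    ultimately have r: "a * Y = (a + real (Suc n)) * X" by simp
    show ?thesis unfolding X_def[symmetric] Y_def[symmetric] \<open>pochhammer a (Suc (Suc n)) = a * Y\<close>
    proof -
      have X': "X = a * Y / (a + real (Suc n))" using r Suc.prems by (simp add: field_simps)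
      show "fact n / X - fact n / Y = fact (Suc n) / (a * Y)"
        unfolding X' using X Suc.prems by (simp add: field_simps)
    qed
  qed
  finally show ?case .
qed



definition FF :: "real \<Rightarrow> nat \<Rightarrow> real poly" where
  "FF e n = (\<Prod>l<n. [: 2 + 2 * real l - e, 1 :])"

lemma poly_FF: "poly (FF e n) x = (\<Prod>l<n. 2 + 2 * real l - e + x)"
  unfolding FF_def by (simp add: poly_prod)

lemma rbinom_FF: "rbinom ((x - e)/2) n = poly (FF e n) x / (2^n * fact n)"
proof -
  have "pochhammer ((x - e)/2 + 1) n = (\<Prod>l<n. (2 + 2 * real l - e + x) / 2)"
    unfolding pochhammer_prod by (intro prod.cong) (auto simp: field_simps lessThan_atLeast0)
  also have "\<dots> = poly (FF e n) x / 2^n"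
    unfolding poly_FF by (simp add: prod_dividef)
  finally show ?thesis unfolding rbinom_def by simp
qed

lemma neg1_pow_diff: "i \<le> n \<Longrightarrow> (-1::real)^(n-i) = (-1)^n * (-1)^i"
proof -
  assume "i \<le> n"
  then have "(-1::real)^n = (-1)^(n-i) * (-1)^i" by (simp add: power_add[symmetric])
  then have "(-1::real)^n * (-1)^i = (-1)^(n-i) * ((-1)^i * (-1)^i)" by simp
  also have "\<dots> = (-1)^(n-i)" by (simp add: power_add[symmetric] flip: power_add) 
  finally show ?thesis by simp
qed

definition Sm :: "real \<Rightarrow> nat \<Rightarrow> nat \<Rightarrow> real" where
  "Sm e n k = (\<Sum>i\<le>n. real (n choose i) * rbinom ((real i - e)/2) n * (-1)^(n-i) / (real i + real k + 1))"

lemma Sm_E: "Sm e n k = (-1)^n / (2^n * fact n) * E n (\<lambda>i. poly (FF e n) (real i) / (real i + real k + 1))"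
  unfolding Sm_def E_def rbinom_FF sum_distrib_left
  by (intro sum.cong refl) (simp add: neg1_pow_diff)

lemma Sm_vanish:
  assumes "e < 2" "1 \<le> m" "m \<le> n" "real k + 1 = 2 * real m - e"
  shows "Sm e n k = 0"
proof -
  define F' where "F' = (\<Prod>l\<in>{..<n} - {m-1}. [: 2 + 2 * real l - e, 1 :])"
  have "FF e n = [: 2 + 2 * real (m-1) - e, 1 :] * F'"
    unfolding FF_def F'_def using assms by (intro prod.remove) auto
  then have FF: "FF e n = [: 2 * real m - e, 1 :] * F'"
    using assms by (simp add: of_nat_diff algebra_simps)
  have "E n (\<lambda>i. poly (FF e n) (real i) / (real i + real k + 1)) = E n (\<lambda>i. poly F' (real i))"
    unfolding E_def
  proof (intro sum.cong refl)
    fix i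
    have d: "real i + real k + 1 = real i + (2 * real m - e)" using assms(4) by simp
    have "real i + (2 * real m - e) > 0" using assms by simp
    then show "real (n choose i) * (- 1) ^ i * (poly (FF e n) (real i) / (real i + real k + 1)) =
          real (n choose i) * (- 1) ^ i * poly F' (real i)"
      unfolding FF d by (simp add: field_simps)
  qed
  also have "\<dots> = 0"
  proof (rule E_poly)
    have "degree F' \<le> sum (degree \<circ> (\<lambda>l. [: 2 + 2 * real l - e, 1 :])) ({..<n} - {m-1})"
      unfolding F'_def by (rule degree_prod_sum_le) simp
    also have "\<dots> = card ({..<n} - {m-1})" by simp
    also have "\<dots> = n - 1" using assms by simp
    finally show "degree F' < n" using assms by simp
  qed
  finally show ?thesis unfolding Sm_E by simp
qed

lemma Sm_last:
  assumes "e < 2" "real k + 1 = 2 * real n + 2 - e"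
  shows "Sm e n k = fact n / pochhammer (2 * real n + 2 - e) (Suc n)"
proof -
  define a where "a = 2 * real n + 2 - e"
  have a: "a > 0" unfolding a_def using assms by simp
  define G where "G = synthetic_div (FF e n) (-a)"
  have dec: "FF e n = [:a, 1:] * G + [:poly (FF e n) (-a):]"
    unfolding G_def using synthetic_div_correct'[of "-a" "FF e n"] by simp
  have pa: "poly (FF e n) (-a) = 2^n * (-1)^n * fact n"
  proof -
    have "poly (FF e n) (-a) = (\<Prod>l<n. 2 * (- real n + real l))"
      unfolding poly_FF a_def by (intro prod.cong) (auto simp: algebra_simps)
    also have "\<dots> = 2^n * pochhammer (- real n) n"
      by (simp only: prod.distrib) (simp add: pochhammer_prod lessThan_atLeast0)
    also have "\<dots> = 2^n * (-1)^n * fact n" by (simp add: pochhammer_same)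
    finally show ?thesis .
  qed
  have EG: "E n (\<lambda>i. poly G (real i)) = 0"
  proof (cases "n = 0")
    case True
    then have "G = 0" unfolding G_def FF_def by (simp add: synthetic_div_eq_0_iff)
    then show ?thesis by (simp add: E_def)
  next
    case False
    have "degree (FF e n) \<le> sum (degree \<circ> (\<lambda>l. [: 2 + 2 * real l - e, 1 :])) {..<n}"
      unfolding FF_def by (rule degree_prod_sum_le) simp
    then have "degree (FF e n) \<le> n" by simp
    then have "degree G < n" unfolding G_def using False by (simp add: degree_synthetic_div)
    then show ?thesis by (rule E_poly)
  qed
  have "E n (\<lambda>i. poly (FF e n) (real i) / (real i + real k + 1))
      = E n (\<lambda>i. poly G (real i) + poly (FF e n) (-a) * (1 / (real i + a)))"
    unfolding E_def
  proof (intro sum.cong refl)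
    fix i
    have "real i + a > 0" using a by simp
    then show "real (n choose i) * (- 1) ^ i * (poly (FF e n) (real i) / (real i + real k + 1)) =
          real (n choose i) * (- 1) ^ i * (poly G (real i) + poly (FF e n) (-a) * (1 / (real i + a)))"
      using assms(2) unfolding a_def[symmetric]
      by (subst (1) dec) (simp add: field_simps)
  qed
  also have "\<dots> = E n (\<lambda>i. poly G (real i)) + poly (FF e n) (-a) * E n (\<lambda>i. 1 / (real i + a))"
    unfolding E_def by (simp add: sum.distrib sum_distrib_left algebra_simps)
  also have "\<dots> = 2^n * (-1)^n * fact n * (fact n / pochhammer a (Suc n))"
    unfolding EG pa E_inv[OF a] by simp
  finally show ?thesis unfolding Sm_E a_def[symmetric]
    by (simp add: field_simps)
qed



lemma poly_integrable: "(\<lambda>x. poly A x * f x) integrable_on {a..b::real}" if "continuous_on {a..b} f"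
  by (intro integrable_continuous_real continuous_intros that)

lemma sign_poly:
  fixes a b :: real
  assumes "a < b"
  shows "\<exists>P. P \<noteq> 0 \<and> degree P \<le> degree A \<and> (\<forall>x. poly P x = 0 \<longrightarrow> a < x \<and> x < b)
           \<and> (\<forall>x\<in>{a..b}. poly A x * poly P x \<ge> 0)"
proof (induction "degree A" arbitrary: A rule: less_induct)
  case less
  show ?case
  proof (cases "A = 0")
    case True
    then show ?thesis by (intro exI[of _ 1]) auto
  next
    case Anz: False
    show ?thesis
    proof (cases "\<exists>r. a < r \<and> r < b \<and> poly A r = 0")
      case True
      then obtain r where r: "a < r" "r < b" "poly A r = 0" by blast
      then obtain A1 where A1: "A = [:-r,1:] * A1" using poly_eq_0_iff_dvd by blast
      then have "A1 \<noteq> 0" using Anz by auto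
      then have dA: "degree A = degree A1 + 1" unfolding A1 by (subst degree_mult_eq) auto
      from less[of A1] dA obtain P1 where P1: "P1 \<noteq> 0" "degree P1 \<le> degree A1"
        "\<forall>x. poly P1 x = 0 \<longrightarrow> a < x \<and> x < b" "\<forall>x\<in>{a..b}. poly A1 x * poly P1 x \<ge> 0" by auto
      show ?thesis
      proof (intro exI[of _ "[:-r,1:] * P1"] conjI)
        have "[:-r,1:] \<noteq> (0::real poly)" by simp
        then show "[:-r,1:] * P1 \<noteq> 0" using P1(1) by (simp only: mult_eq_0_iff) auto
        show "degree ([:-r,1:] * P1) \<le> degree A" using P1 dA by (subst degree_mult_eq) auto
        show "\<forall>x. poly ([:- r, 1:] * P1) x = 0 \<longrightarrow> a < x \<and> x < b" using P1 r by auto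
        show "\<forall>x\<in>{a..b}. poly A x * poly ([:- r, 1:] * P1) x \<ge> 0"
        proof
        fix x assume "x \<in> {a..b}"
        then have "poly A1 x * poly P1 x \<ge> 0" using P1 by auto
        moreover have "poly A x * poly ([:- r, 1:] * P1) x = (x - r)^2 * (poly A1 x * poly P1 x)"
          unfolding A1 by (simp add: power2_eq_square algebra_simps)
        ultimately show "poly A x * poly ([:- r, 1:] * P1) x \<ge> 0" by simp
        qed
      qed
    next
      case False
      define c where "c = (a+b)/2"
      have c: "a < c" "c < b" unfolding c_def using assms by auto
      have pc: "poly A c \<noteq> 0" using False c by auto
      show ?thesis
      proof (intro exI[of _ "[:poly A c:]"] conjI allI impI ballI)
        fix x :: real assume x: "x \<in> {a..b}"
        show "poly A x * poly [:poly A c:] x \<ge> 0"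
        proof (rule ccontr)
          assume neg: "\<not> ?thesis"
          then have lt: "poly A x * poly A c < 0" by simp
          show False
          proof (cases "x < c")
            case True
            from poly_IVT[OF True lt] obtain y where "y > x" "y < c" "poly A y = 0" by auto
            then show False using False x c by auto
          next
            case False2: False
            then have "c < x" using lt by (cases "x = c") (auto simp: mult_less_0_iff)
            from poly_IVT[OF this] lt obtain y where "y > c" "y < x" "poly A y = 0"
              by (auto simp: mult.commute)
            then show False using False x c by auto
          qed
        qed
      qed (use pc in auto)
    qed
  qed
qed

lemma no_root_sign:
  fixes c d :: real
  assumes "\<And>x. x \<in> {c..d} \<Longrightarrow> poly P x \<noteq> 0" "x \<in> {c..d}"
  shows "poly P x * poly P c > 0"
proof (rule ccontr)
  assume "\<not> ?thesis"
  moreover have "poly P x \<noteq> 0" "poly P c \<noteq> 0" using assms by auto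
  ultimately have lt: "poly P c * poly P x < 0"
    by (metis linorder_neqE_linordered_idom mult.commute mult_eq_0_iff)
  then have "c \<noteq> x" by auto
  then have "c < x" using assms by auto
  from poly_IVT[OF this lt] obtain y where "c < y" "y < x" "poly P y = 0" by auto
  then show False using assms by auto
qed

lemma poly_zero_on_interval:
  fixes p :: "real poly"
  assumes "a < b" "\<And>x. x \<in> {a..b} \<Longrightarrow> poly p x = 0"
  shows "p = 0"
proof (rule ccontr)
  assume "p \<noteq> 0"
  then have "finite {x. poly p x = 0}" by (rule poly_roots_finite)
  moreover have "{a..b} \<subseteq> {x. poly p x = 0}" using assms by auto
  ultimately show False using infinite_Icc[OF assms(1)] finite_subset by blast
qed

lemma integral_poly_expand:
  "integral {a..b::real} (\<lambda>x. poly A x * poly P x)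
     = (\<Sum>i\<le>degree P. coeff P i * integral {a..b} (\<lambda>x. poly A x * x^i))"
proof -
  have "integral {a..b} (\<lambda>x. poly A x * poly P x)
      = integral {a..b} (\<lambda>x. \<Sum>i\<le>degree P. coeff P i * (poly A x * x^i))"
    by (simp add: poly_altdef sum_distrib_left algebra_simps)
  also have "\<dots> = (\<Sum>i\<le>degree P. integral {a..b} (\<lambda>x. coeff P i * (poly A x * x^i)))"
    by (rule integral_sum) (auto intro!: integrable_on_mult_right poly_integrable continuous_intros)
  also have "\<dots> = (\<Sum>i\<le>degree P. coeff P i * integral {a..b} (\<lambda>x. poly A x * x^i))"
    by simp
  finally show ?thesis .
qed

definition mom :: "real poly \<Rightarrow> real poly \<Rightarrow> nat \<Rightarrow> real" where
  "mom A B k = integral {-1..0} (\<lambda>x. poly A x * x ^ k) + integral {0..1} (\<lambda>x. poly B x * x ^ k)"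

lemma int_diff: "integral {a..b::real} (\<lambda>x. poly (A - A') x * x ^ k) = integral {a..b} (\<lambda>x. poly A x * x ^ k) - integral {a..b} (\<lambda>x. poly A' x * x ^ k)"
proof -
  have "integral {a..b} (\<lambda>x. poly (A - A') x * x ^ k) = integral {a..b} (\<lambda>x. poly A x * x ^ k - poly A' x * x ^ k)"
    by (simp add: algebra_simps)
  also have "\<dots> = integral {a..b} (\<lambda>x. poly A x * x ^ k) - integral {a..b} (\<lambda>x. poly A' x * x ^ k)"
    by (rule integral_diff) (auto intro!: poly_integrable continuous_intros)
  finally show ?thesis .
qed

lemma mom_diff: "mom (A - A') (B - B') k = mom A B k - mom A' B' k"
  unfolding mom_def int_diff by simp

lemma uniq_core:
  fixes A B :: "real poly"
  assumes dA: "degree A + 1 \<le> n" and dB: "degree B + 1 \<le> m"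
    and M: "\<And>k. k < n + m \<Longrightarrow> mom A B k = 0"
  shows "A = 0 \<and> B = 0"
proof -
  obtain PA where PA: "PA \<noteq> 0" "degree PA \<le> degree A" "\<forall>x. poly PA x = 0 \<longrightarrow> -1 < x \<and> x < 0"
      "\<forall>x\<in>{-1..0}. poly A x * poly PA x \<ge> 0"
    using sign_poly[of "-1" 0 A] by auto
  obtain PB where PB: "PB \<noteq> 0" "degree PB \<le> degree B" "\<forall>x. poly PB x = 0 \<longrightarrow> 0 < x \<and> x < 1"
      "\<forall>x\<in>{0..1}. poly B x * poly PB x \<ge> 0"
    using sign_poly[of 0 1 B] by auto
  define sA where "sA = poly PA 0"
  define sB where "sB = poly PB (-1)"
  have sA: "\<And>x. x \<in> {0..1} \<Longrightarrow> poly PA x * sA > 0"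
    unfolding sA_def by (rule no_root_sign[where d=1]) (use PA in force)+
  have sB: "\<And>x. x \<in> {-1..0} \<Longrightarrow> poly PB x * sB > 0"
    unfolding sB_def by (rule no_root_sign[where d=0]) (use PB in force)+
  have sAnz: "sA \<noteq> 0" using sA[of 0] by auto
  have sBnz: "sB \<noteq> 0" using sB[of 0] by auto
  define P where "P = (if sA * sB > 0 then smult sB (PA * PB) else [:0, -sB:] * (PA * PB))"
  have Pnz: "P \<noteq> 0" unfolding P_def using PA PB sBnz by auto
  have dP: "degree P \<le> degree PA + degree PB + 1"
    unfolding P_def using PA PB sBnz
    by (auto simp: degree_mult_eq) 
  have posA: "poly A x * poly P x \<ge> 0" if x: "x \<in> {-1..0}" for x
  proof -
    have u: "poly A x * poly PA x \<ge> 0" using PA x by auto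
    have v: "poly PB x * sB > 0" using sB x by auto
    have w: "poly A x * poly PA x * (poly PB x * sB) \<ge> 0" using u v by simp
    show ?thesis
    proof (cases "sA * sB > 0")
      case True
      then show ?thesis unfolding P_def using w by (simp add: algebra_simps)
    next
      case False
      have "poly A x * poly P x = (-x) * (poly A x * poly PA x * (poly PB x * sB))"
        unfolding P_def using False by (simp add: algebra_simps)
      then show ?thesis using w x by (simp add: mult_nonpos_nonneg)
    qed
  qed
  have posB: "poly B x * poly P x \<ge> 0" if x: "x \<in> {0..1}" for x
  proof -
    have u: "poly B x * poly PB x \<ge> 0" using PB x by auto
    have v: "poly PA x * sA > 0" using sA x by auto
    have w: "poly B x * poly PB x * (poly PA x * sA) \<ge> 0" using u v by simp
    show ?thesis
    proof (cases "sA * sB > 0")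
      case True
      have "poly B x * poly P x * (sA * sA) = (poly B x * poly PB x * (poly PA x * sA)) * (sA * sB)"
        unfolding P_def using True by (simp add: algebra_simps)
      moreover have "... \<ge> 0" using w True by simp
      moreover have "sA * sA > 0" using sAnz by (auto simp: zero_less_mult_iff linorder_neq_iff)
      ultimately show ?thesis by (metis zero_le_mult_iff not_le)
    next
      case False
      then have F: "sA * sB < 0" using sAnz sBnz by (simp add: mult_less_0_iff not_less_iff_gr_or_eq)
      have e1: "poly B x * poly P x * (sA * sA) = x * (poly B x * poly PB x * (poly PA x * sA)) * (- (sA * sB))"
        unfolding P_def using False by (simp add: algebra_simps)
      have e2: "x * (poly B x * poly PB x * (poly PA x * sA)) \<ge> 0" using w x by simp
      have e3: "- (sA * sB) \<ge> 0" using F by simp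
      have "x * (poly B x * poly PB x * (poly PA x * sA)) * (- (sA * sB)) \<ge> 0"
        using e2 e3 by (rule mult_nonneg_nonneg)
      with e1 have "poly B x * poly P x * (sA * sA) \<ge> 0" by simp
      moreover have "sA * sA > 0" using sAnz by (auto simp: zero_less_mult_iff linorder_neq_iff)
      ultimately show ?thesis by (metis zero_le_mult_iff not_le)
    qed
  qed
  have "integral {-1..0} (\<lambda>x. poly A x * poly P x) + integral {0..1} (\<lambda>x. poly B x * poly P x)
      = (\<Sum>i\<le>degree P. coeff P i * mom A B i)"
    unfolding integral_poly_expand mom_def by (simp add: sum.distrib algebra_simps)
  also have "\<dots> = 0"
  proof (intro sum.neutral ballI)
    fix i assume "i \<in> {..degree P}"
    then have "i < n + m" using dP PA(2) PB(2) dA dB by auto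
    then show "coeff P i * mom A B i = 0" using M by simp
  qed
  finally have tot: "integral {-1..0} (\<lambda>x. poly A x * poly P x) + integral {0..1} (\<lambda>x. poly B x * poly P x) = 0" .
  have i1: "integral {-1..0} (\<lambda>x. poly A x * poly P x) \<ge> 0"
    by (rule integral_nonneg) (use posA in \<open>auto intro!: poly_integrable continuous_intros\<close>)
  have i2: "integral {0..1} (\<lambda>x. poly B x * poly P x) \<ge> 0"
    by (rule integral_nonneg) (use posB in \<open>auto intro!: poly_integrable continuous_intros\<close>)
  have z1: "integral {-1..0} (\<lambda>x. poly A x * poly P x) = 0" using tot i1 i2 by linarith
  have z2: "integral {0..1} (\<lambda>x. poly B x * poly P x) = 0" using tot i1 i2 by linarith
  have c1: "continuous_on {-1..0} (\<lambda>x. poly A x * poly P x)" by (intro continuous_intros)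
  have "\<forall>x\<in>{-1..0}. poly A x * poly P x = 0"
    by (rule integral_eq_0_iff[THEN iffD1, OF c1 _ _ z1]) (use posA in auto)
  then have AP: "A * P = 0" by (intro poly_zero_on_interval[of "-1" 0]) auto
  have c2: "continuous_on {0..1} (\<lambda>x. poly B x * poly P x)" by (intro continuous_intros)
  have "\<forall>x\<in>{0..1}. poly B x * poly P x = 0"
    by (rule integral_eq_0_iff[THEN iffD1, OF c2 _ _ z2]) (use posB in auto)
  then have BP: "B * P = 0" by (intro poly_zero_on_interval[of 0 1]) auto
  from AP BP show ?thesis using Pnz by auto
qed

lemma LA_cond_mom: "LA_cond n m A B \<longleftrightarrow>
     (A = 0 \<or> degree A < n) \<and> (B = 0 \<or> degree B < m) \<and>
     (\<forall>k. k + 1 < n + m \<longrightarrow> mom A B k = 0) \<and> mom A B (n + m - 1) = 1"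
  unfolding LA_cond_def mom_def by simp

lemma deg_bound: "A = 0 \<or> degree A < n \<Longrightarrow> 1 \<le> n \<Longrightarrow> degree A + 1 \<le> n"
  by auto

lemma LA_uniq:
  assumes "LA_cond n m A B" "LA_cond n m A' B'" "1 \<le> n" "1 \<le> m"
  shows "A = A' \<and> B = B'"
proof -
  have dA: "degree (A - A') + 1 \<le> n"
  proof -
    have "degree A \<le> n - 1" "degree A' \<le> n - 1"
      using assms deg_bound unfolding LA_cond_mom by fastforce+
    then have "degree (A - A') \<le> n - 1" by (intro degree_diff_le)
    then show ?thesis using assms by simp
  qed
  have dB: "degree (B - B') + 1 \<le> m"
  proof -
    have "degree B \<le> m - 1" "degree B' \<le> m - 1"
      using assms deg_bound unfolding LA_cond_mom by fastforce+
    then have "degree (B - B') \<le> m - 1" by (intro degree_diff_le)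
    then show ?thesis using assms by simp
  qed
  have M: "mom (A - A') (B - B') k = 0" if "k < n + m" for k
  proof (cases "k + 1 < n + m")
    case True
    then show ?thesis unfolding mom_diff using assms unfolding LA_cond_mom by simp
  next
    case False
    then have "k = n + m - 1" using that by simp
    then show ?thesis unfolding mom_diff using assms unfolding LA_cond_mom by simp
  qed
  from uniq_core[OF dA dB M] show ?thesis by simp
qed

lemma LA_pair_eq:
  assumes "LA_cond n m A B" "1 \<le> n" "1 \<le> m"
  shows "LA_pair n m = (A, B)"
  unfolding LA_pair_def
proof (rule the_equality)
  show "LA_cond n m (fst (A, B)) (snd (A, B))" using assms by simp
next
  fix AB assume "LA_cond n m (fst AB) (snd AB)"
  then show "AB = (A, B)" using LA_uniq[OF _ assms(1) assms(2,3)] by (cases AB) auto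
qed

lemma HI_cong: "(f has_integral u) S \<Longrightarrow> (\<And>x. f x = g x) \<Longrightarrow> (g has_integral u) S"
proof -
  assume "(f has_integral u) S" "\<And>x. f x = g x"
  moreover have "f = g" using calculation(2) by (rule ext)
  ultimately show ?thesis by simp
qed

lemma HI_pow: "((\<lambda>x::real. x ^ j) has_integral (1 / real (Suc j))) {0..1}"
proof -
  have "((\<lambda>x::real. x ^ j) has_integral ((\<lambda>x. x ^ Suc j / real (Suc j)) 1 - (\<lambda>x. x ^ Suc j / real (Suc j)) 0)) {0..1}"
  proof (rule fundamental_theorem_of_calculus)
    fix x :: real assume "x \<in> {0..1}"
    have "((\<lambda>x. x ^ Suc j) has_real_derivative real (Suc j) * x ^ j) (at x within {0..1})"
      using DERIV_pow[of "Suc j" x "{0..1}"] by simp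
    then have "((\<lambda>x. x ^ Suc j / real (Suc j)) has_real_derivative (real (Suc j) * x ^ j) / real (Suc j)) (at x within {0..1})"
      by (rule DERIV_cdivide)
    then have "((\<lambda>x. x ^ Suc j / real (Suc j)) has_real_derivative x ^ j) (at x within {0..1})"
      by (simp del: of_nat_Suc)
    then show "((\<lambda>x. x ^ Suc j / real (Suc j)) has_vector_derivative x ^ j) (at x within {0..1})"
      by (simp add: has_real_derivative_iff_has_vector_derivative)
  qed simp
  then show ?thesis by simp
qed

lemma HI_sum:
  "((\<lambda>x::real. (\<Sum>i\<le>n. c i * x ^ i) * x ^ k) has_integral (\<Sum>i\<le>n. c i / (real i + real k + 1))) {0..1}"
proof -
  have "((\<lambda>x::real. \<Sum>i\<le>n. c i * x ^ (i + k)) has_integral (\<Sum>i\<le>n. c i / (real i + real k + 1))) {0..1}"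
  proof (rule has_integral_sum)
    fix i
    have "((\<lambda>x::real. c i * x ^ (i + k)) has_integral (c i * (1 / real (Suc (i + k))))) {0..1}"
      by (rule has_integral_mult_right[OF HI_pow])
    then show "((\<lambda>x::real. c i * x ^ (i + k)) has_integral (c i / (real i + real k + 1))) {0..1}"
      by (simp add: add_ac)
  qed simp
  then show ?thesis by (rule HI_cong) (simp add: sum_distrib_right power_add mult.assoc)
qed

lemma HI_p: "((\<lambda>x. poly (p_poly n) x * x ^ k) has_integral Sm 0 n k) {0..1}"
proof -
  have "poly (p_poly n) x = (\<Sum>i\<le>n. (real (n choose i) * rbinom (real i / 2) n * (-1) ^ (n - i)) * x ^ i)" for x
    unfolding p_poly_def by (simp add: poly_sum poly_monom)
  then show ?thesis using HI_sum[of "\<lambda>i. real (n choose i) * rbinom (real i / 2) n * (-1) ^ (n - i)" n k]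
    unfolding Sm_def by simp
qed

lemma HI_q: "((\<lambda>x. poly (q_poly n) x * x ^ k) has_integral Sm 1 n k) {0..1}"
proof -
  have "poly (q_poly n) x = (\<Sum>i\<le>n. (real (n choose i) * rbinom ((real i - 1) / 2) n * (-1) ^ (n - i)) * x ^ i)" for x
    unfolding q_poly_def by (simp add: poly_sum poly_monom)
  then show ?thesis using HI_sum[of "\<lambda>i. real (n choose i) * rbinom ((real i - 1) / 2) n * (-1) ^ (n - i)" n k]
    unfolding Sm_def by simp
qed

definition refl :: "real poly \<Rightarrow> real poly" where
  "refl C = pcompose C [:0, -1:]"

lemma poly_refl [simp]: "poly (refl C) x = poly C (-x)"
  unfolding refl_def by (simp add: poly_pcompose)

lemma degree_refl [simp]: "degree (refl C) = degree C"
  unfolding refl_def by (simp add: degree_pcompose)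

lemma refl_0 [simp]: "refl 0 = 0"
  unfolding refl_def by simp

lemma HI_refl:
  assumes "((\<lambda>x. poly C x * x ^ k) has_integral u) {0..1}"
  shows "((\<lambda>x. poly (smult s (refl C)) x * x ^ k) has_integral (s * (-1)^k * u)) {-1..0}"
proof -
  have "((\<lambda>y. s * (-1)^k * (poly C y * y ^ k)) has_integral (s * (-1)^k * u)) {0..1}"
    by (rule has_integral_mult_right[OF assms])
  then have "((\<lambda>x. (\<lambda>y. s * (-1)^k * (poly C y * y ^ k)) (-x)) has_integral (s * (-1)^k * u)) {-1..-0}"
    by (subst has_integral_reflect_real)
  moreover have "(\<lambda>x. (\<lambda>y. s * (-1)^k * (poly C y * y ^ k)) (-x)) = (\<lambda>x. poly (smult s (refl C)) x * x ^ k)"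
  proof
    fix x :: real
    have "(-1::real)^k * (-x)^k = x^k" by (simp flip: power_mult_distrib)
    then show "(\<lambda>y. s * (-1)^k * (poly C y * y ^ k)) (-x) = poly (smult s (refl C)) x * x ^ k"
      by (simp add: algebra_simps)
  qed
  ultimately show ?thesis by simp
qed

lemma mom_val:
  assumes "((\<lambda>x. poly C x * x ^ k) has_integral u) {0..1}"
      and "((\<lambda>x. poly B x * x ^ k) has_integral v) {0..1}"
  shows "mom (smult s (refl C)) B k = s * (-1)^k * u + v"
  unfolding mom_def using integral_unique[OF HI_refl[OF assms(1)]] integral_unique[OF assms(2)] by simp

lemma HI_smult:
  fixes C D :: "real poly"
  assumes "((\<lambda>x. poly C x * x ^ k) has_integral u) {0..1}"
  shows "((\<lambda>x. poly (smult c C) x * x ^ k) has_integral (c * u)) {0..1}"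
  by (rule HI_cong[OF has_integral_mult_right[OF assms]]) (simp add: mult_ac)

lemma HI_add:
  fixes C D :: "real poly"
  assumes "((\<lambda>x. poly C x * x ^ k) has_integral u) {0..1}" "((\<lambda>x. poly D x * x ^ k) has_integral v) {0..1}"
  shows "((\<lambda>x. poly (C + D) x * x ^ k) has_integral (u + v)) {0..1}"
  by (rule HI_cong[OF has_integral_add[OF assms]]) (simp add: algebra_simps)

lemma HI_diff:
  fixes C D :: "real poly"
  assumes "((\<lambda>x. poly C x * x ^ k) has_integral u) {0..1}" "((\<lambda>x. poly D x * x ^ k) has_integral v) {0..1}"
  shows "((\<lambda>x. poly (C - D) x * x ^ k) has_integral (u - v)) {0..1}"
  by (rule HI_cong[OF has_integral_diff[OF assms]]) (simp add: left_diff_distrib)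

lemma degree_p: "degree (p_poly n) \<le> n"
  unfolding p_poly_def by (rule degree_sum_le) (auto intro: order.trans[OF degree_monom_le])

lemma degree_q: "degree (q_poly n) \<le> n"
  unfolding q_poly_def by (rule degree_sum_le) (auto intro: order.trans[OF degree_monom_le])

lemma coeff_p: "coeff (p_poly n) n = rbinom (real n / 2) n"
  unfolding p_poly_def by (simp add: coeff_sum)

lemma coeff_q: "coeff (q_poly n) n = rbinom ((real n - 1) / 2) n"
  unfolding q_poly_def by (simp add: coeff_sum)

lemma poch_fact: "pochhammer (real (m + 1)) (Suc n) = fact (m + Suc n) / fact m"
proof -
  have "pochhammer (1::real) (m + Suc n) = pochhammer 1 m * pochhammer (1 + real m) (Suc n)"
    by (rule pochhammer_product')
  then have "fact (m + Suc n) = (fact m :: real) * pochhammer (real (m + 1)) (Suc n)"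
    by (simp add: pochhammer_fact add_ac)
  then show ?thesis by simp
qed

lemma Sm_odd_p: "k + 1 < 2 * n + 2 \<Longrightarrow> odd k \<Longrightarrow> Sm 0 n k = 0"
proof -
  assume a: "k + 1 < 2 * n + 2" "odd k"
  then obtain j where j: "k = 2 * j + 1" by (metis oddE)
  show ?thesis by (rule Sm_vanish[of 0 "j+1"]) (use a j in auto)
qed

lemma Sm_even_q: "k + 1 < 2 * n + 1 \<Longrightarrow> even k \<Longrightarrow> Sm 1 n k = 0"
proof -
  assume a: "k + 1 < 2 * n + 1" "even k"
  then obtain j where j: "k = 2 * j" by (metis evenE)
  show ?thesis by (rule Sm_vanish[of 1 "j+1"]) (use a j in auto)
qed

lemma Sm_p_last: "Sm 0 n (2 * n + 1) = fact n * fact (2 * n + 1) / fact (3 * n + 2)"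
proof -
  have "Sm 0 n (2 * n + 1) = fact n / pochhammer (2 * real n + 2 - 0) (Suc n)"
    by (rule Sm_last) auto
  also have "pochhammer (2 * real n + 2 - 0) (Suc n) = fact (3 * n + 2) / fact (2 * n + 1)"
    using poch_fact[of "2 * n + 1" n] by (simp add: algebra_simps)
  finally show ?thesis by simp
qed

lemma Sm_q_last: "Sm 1 n (2 * n) = fact n * fact (2 * n) / fact (3 * n + 1)"
proof -
  have "Sm 1 n (2 * n) = fact n / pochhammer (2 * real n + 2 - 1) (Suc n)"
    by (rule Sm_last) auto
  also have "pochhammer (2 * real n + 2 - 1) (Suc n) = fact (3 * n + 1) / fact (2 * n)"
    using poch_fact[of "2 * n" n] by (simp add: algebra_simps)
  finally show ?thesis by simp
qed

lemma neg1_even: "even k \<Longrightarrow> (-1::real)^k = 1" by simp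
lemma neg1_odd: "odd k \<Longrightarrow> (-1::real)^k = -1" by simp

lemma diag_pair:
  fixes n :: nat
  defines "c \<equiv> 1/2 * (fact (3*n+2) / (fact n * fact (2*n+1)) :: real)"
  shows "LA_pair (n+1) (n+1) = (smult (-1) (refl (smult c (p_poly n))), smult c (p_poly n))"
proof (rule LA_pair_eq)
  define B where "B = smult c (p_poly n)"
  have HB: "((\<lambda>x. poly B x * x ^ k) has_integral (c * Sm 0 n k)) {0..1}" for k
    unfolding B_def by (rule HI_smult[OF HI_p])
  have M: "mom (smult (-1) (refl B)) B k = (1 - (-1)^k) * (c * Sm 0 n k)" for k
    using mom_val[OF HB HB, of "-1"] by (simp add: algebra_simps)
  have dB: "degree B \<le> n" unfolding B_def using degree_p[of n] by (simp add: order.trans[OF degree_smult_le])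
  show "LA_cond (n+1) (n+1) (smult (-1) (refl (smult c (p_poly n)))) (smult c (p_poly n))"
    unfolding B_def[symmetric] LA_cond_mom
  proof (intro conjI allI impI)
    show "smult (- 1) (refl B) = 0 \<or> degree (smult (- 1) (refl B)) < n + 1" using dB by simp
    show "B = 0 \<or> degree B < n + 1" using dB by simp
  next
    fix k assume k: "k + 1 < n + 1 + (n + 1)"
    show "mom (smult (- 1) (refl B)) B k = 0"
    proof (cases "even k")
      case True then show ?thesis unfolding M by simp
    next
      case False
      then have "Sm 0 n k = 0" using k by (intro Sm_odd_p) auto
      then show ?thesis unfolding M by simp
    qed
  next
    have k: "n + 1 + (n + 1) - 1 = 2 * n + 1" by simp
    have "mom (smult (- 1) (refl B)) B (2 * n + 1) = 2 * (c * (fact n * fact (2 * n + 1) / fact (3 * n + 2)))"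
      unfolding M Sm_p_last by simp
    also have "\<dots> = 1"
    proof -
      have g: "\<And>F1 F2 F3::real. F1 > 0 \<Longrightarrow> F2 > 0 \<Longrightarrow> F3 > 0 \<Longrightarrow> 2 * (1/2 * (F3 / (F1 * F2)) * (F1 * F2 / F3)) = 1"
        by (simp add: field_simps)
      show ?thesis unfolding c_def by (rule g) auto
    qed
    finally show "mom (smult (- 1) (refl B)) B (n + 1 + (n + 1) - 1) = 1" unfolding k .
  qed
qed auto

context
  fixes n :: nat
  assumes n1: "1 \<le> n"
begin

definition r1 :: real where "r1 = rbinom (real n / 2) n"
definition r2 :: real where "r2 = rbinom ((real n - 1) / 2) n"
definition bb :: real where "bb = 2 * pochhammer (real n / 2 + 1) n * (fact (2*n) / fact (3*n+1))"
definition Bm :: "real poly" where "Bm = smult (1/bb) (smult r1 (q_poly n) - smult r2 (p_poly n))"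
definition Bp :: "real poly" where "Bp = smult (1/bb) (smult r1 (q_poly n) + smult r2 (p_poly n))"

lemma bb_pos: "bb > 0"
  unfolding bb_def by (auto intro!: pochhammer_pos mult_pos_pos divide_pos_pos)

lemma HBm: "((\<lambda>x. poly Bm x * x ^ k) has_integral ((1/bb) * (r1 * Sm 1 n k - r2 * Sm 0 n k))) {0..1}"
  unfolding Bm_def by (intro HI_smult HI_diff HI_q HI_p)

lemma HBp: "((\<lambda>x. poly Bp x * x ^ k) has_integral ((1/bb) * (r1 * Sm 1 n k + r2 * Sm 0 n k))) {0..1}"
  unfolding Bp_def by (intro HI_smult HI_add HI_q HI_p)

lemma dBp: "degree Bp \<le> n"
proof -
  have "degree (smult r1 (q_poly n)) \<le> n" using degree_q by (rule order.trans[OF degree_smult_le])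
  moreover have "degree (smult r2 (p_poly n)) \<le> n" using degree_p by (rule order.trans[OF degree_smult_le])
  ultimately have "degree (smult r1 (q_poly n) + smult r2 (p_poly n)) \<le> n" by (rule degree_add_le)
  then show ?thesis unfolding Bp_def by (rule order.trans[OF degree_smult_le])
qed

lemma dBm: "Bm = 0 \<or> degree Bm < n"
proof -
  have d: "degree Bm \<le> n" unfolding Bm_def using degree_p[of n] degree_q[of n]
    by (intro order.trans[OF degree_smult_le] degree_diff_le) (auto intro: order.trans[OF degree_smult_le])
  have "coeff Bm n = 0" unfolding Bm_def by (simp add: coeff_p coeff_q r1_def r2_def)
  then show ?thesis using d n1 by (metis le_neq_implies_less leading_coeff_0_iff)
qed

lemma mom_common:
  assumes "k + 1 < 2 * n + 1"
  shows "r1 * Sm 1 n k = 0 \<or> odd k" "r2 * Sm 0 n k = 0 \<or> even k"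
  using Sm_even_q[OF assms] Sm_odd_p[of k n] assms by auto

lemma last_val: "2 * (1/bb) * (r1 * Sm 1 n (2 * n)) = 1"
proof -
  have "r1 = pochhammer (real n / 2 + 1) n / fact n" unfolding r1_def rbinom_def by simp
  moreover have g: "\<And>X F1 F2 F3::real. X > 0 \<Longrightarrow> F1 > 0 \<Longrightarrow> F2 > 0 \<Longrightarrow> F3 > 0 \<Longrightarrow>
     2 * (1 / (2 * X * (F2 / F3))) * (X / F1 * (F1 * F2 / F3)) = 1"
    by (simp add: field_simps)
  moreover have "pochhammer (real n / 2 + 1) n > 0" by (rule pochhammer_pos) simp
  ultimately show ?thesis unfolding Sm_q_last bb_def by (simp only:) (rule g; simp)
qed

lemma e1: "(1/bb) * ((-1)^(2*n) * (a + b) + (a - b)) = 2 * (1/bb) * a" by simp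
lemma e2: "(1/bb) * ((-1)^(2*n) * (a - b) + (a + b)) = 2 * (1/bb) * a" by simp

lemma pair1: "LA_pair (n+1) n = (smult 1 (refl Bp), Bm)"
proof (rule LA_pair_eq)
  have M: "mom (smult 1 (refl Bp)) Bm k = (1/bb) * ((-1)^k * (r1 * Sm 1 n k + r2 * Sm 0 n k) + (r1 * Sm 1 n k - r2 * Sm 0 n k))" for k
    using mom_val[OF HBp HBm, of 1] by (simp add: algebra_simps)
  show "LA_cond (n+1) n (smult 1 (refl Bp)) Bm"
    unfolding LA_cond_mom
  proof (intro conjI allI impI)
    show "smult 1 (refl Bp) = 0 \<or> degree (smult 1 (refl Bp)) < n + 1" using dBp by simp
    show "Bm = 0 \<or> degree Bm < n" by (rule dBm)
  next
    fix k assume k: "k + 1 < n + 1 + n"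
    then have k': "k + 1 < 2 * n + 1" by simp
    show "mom (smult 1 (refl Bp)) Bm k = 0"
      using mom_common[OF k'] unfolding M by (cases "even k") auto
  next
    have k: "n + 1 + n - 1 = 2 * n" using n1 by simp
    show "mom (smult 1 (refl Bp)) Bm (n + 1 + n - 1) = 1"
      unfolding k M e1[of "r1 * Sm 1 n (2*n)" "r2 * Sm 0 n (2*n)"] by (rule last_val)
  qed
qed (use n1 in auto)

lemma pair2: "LA_pair n (n+1) = (smult 1 (refl Bm), Bp)"
proof (rule LA_pair_eq)
  have M: "mom (smult 1 (refl Bm)) Bp k = (1/bb) * ((-1)^k * (r1 * Sm 1 n k - r2 * Sm 0 n k) + (r1 * Sm 1 n k + r2 * Sm 0 n k))" for k
    using mom_val[OF HBm HBp, of 1] by (simp add: algebra_simps)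
  show "LA_cond n (n+1) (smult 1 (refl Bm)) Bp"
    unfolding LA_cond_mom
  proof (intro conjI allI impI)
    show "smult 1 (refl Bm) = 0 \<or> degree (smult 1 (refl Bm)) < n" using dBm by auto
    show "Bp = 0 \<or> degree Bp < n + 1" using dBp by simp
  next
    fix k assume k: "k + 1 < n + (n + 1)"
    then have k': "k + 1 < 2 * n + 1" by simp
    show "mom (smult 1 (refl Bm)) Bp k = 0"
      using mom_common[OF k'] unfolding M by (cases "even k") auto
  next
    have k: "n + (n + 1) - 1 = 2 * n" using n1 by simp
    show "mom (smult 1 (refl Bm)) Bp (n + (n + 1) - 1) = 1"
      unfolding k M e2[of "r1 * Sm 1 n (2*n)" "r2 * Sm 0 n (2*n)"] by (rule last_val)
  qed
qed (use n1 in auto)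

end

theorem mainTheorem5:
  shows "(\<forall>(n::nat) (x::real).
            poly (LA_B (n+1) (n+1)) x
              = 1/2 * (fact (3*n+2) / (fact n * fact (2*n+1))) * poly (p_poly n) x
          \<and> poly (LA_A (n+1) (n+1)) x = - poly (LA_B (n+1) (n+1)) (-x))
       \<and> (\<forall>(n::nat) (x::real). n \<ge> 1 \<longrightarrow>
            (let b = 2 * pochhammer (real n / 2 + 1) n * (fact (2*n) / fact (3*n+1)) in
              b * poly (LA_B (n+1) n) x
                = rbinom (real n / 2) n * poly (q_poly n) x
                  - rbinom ((real n - 1) / 2) n * poly (p_poly n) x
            \<and> b * poly (LA_B n (n+1)) x
                = rbinom (real n / 2) n * poly (q_poly n) x
                  + rbinom ((real n - 1) / 2) n * poly (p_poly n) x
            \<and> poly (LA_A (n+1) n) x = poly (LA_B n (n+1)) (-x)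
            \<and> poly (LA_A n (n+1)) x = poly (LA_B (n+1) n) (-x)))"
proof (intro conjI allI impI)
  fix n :: nat and x :: real
  show "poly (LA_B (n+1) (n+1)) x = 1/2 * (fact (3*n+2) / (fact n * fact (2*n+1))) * poly (p_poly n) x"
    unfolding LA_B_def diag_pair by simp
  show "poly (LA_A (n+1) (n+1)) x = - poly (LA_B (n+1) (n+1)) (-x)"
    unfolding LA_B_def LA_A_def diag_pair by simp
next
  fix n :: nat and x :: real
  assume n1: "n \<ge> 1"
  have bb: "bb n = 2 * pochhammer (real n / 2 + 1) n * (fact (2*n) / fact (3*n+1))"
    using bb_def[OF n1] .
  have bpos: "bb n > 0" by (rule bb_pos[OF n1])
  show "let b = 2 * pochhammer (real n / 2 + 1) n * (fact (2*n) / fact (3*n+1)) in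
              b * poly (LA_B (n+1) n) x
                = rbinom (real n / 2) n * poly (q_poly n) x
                  - rbinom ((real n - 1) / 2) n * poly (p_poly n) x
            \<and> b * poly (LA_B n (n+1)) x
                = rbinom (real n / 2) n * poly (q_poly n) x
                  + rbinom ((real n - 1) / 2) n * poly (p_poly n) x
            \<and> poly (LA_A (n+1) n) x = poly (LA_B n (n+1)) (-x)
            \<and> poly (LA_A n (n+1)) x = poly (LA_B (n+1) n) (-x)"
    unfolding Let_def bb[symmetric] LA_A_def LA_B_def pair1[OF n1] pair2[OF n1]
    using bpos by (simp add: Bm_def[OF n1] Bp_def[OF n1] r1_def[OF n1] r2_def[OF n1] algebra_simps)
qed

end
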